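(* Let $\ell \geq 2$ and $s \geq 1$ be integers, and let $p_n/q_n$ ($n \ge 0$) be the $n$th convergent of the regular continued fraction of $$s e^{1/(\ell s)} = [s, \ell - 1, 1, 2s-1, 3\ell - 1, 1, 2s-1, 5\ell - 1, 1, 2s-1, \dots, (2k-1)\ell - 1, 1, 2s-1, \dots].$$ Then $$\sum_{n \geq 0} \left|p_n - s e^{1/(\ell s)} q_n\right| = e^{1/(\ell s)} \sqrt{\frac{\pi s}{\ell}}\, \operatorname{erf}\!\left(1/\sqrt{\ell s}\right).$$ Moreover, let $s \geq 1$ be an integer and let $p_n^*/q_n^*$ ($n\ge 0$) be the $n$th convergent of the regular continued fraction of $$s e^{1/s} = [s+1, 2s-1, 2, 1, 2s-1, 4, 1, \dots, 2s-1, 2k, 1, \dots].$$ Then $$\sum_{n \geq 0} \left|p_n^* - s e^{1/s} q_n^*\right| = e^{1/s} \sqrt{\pi s}\, \operatorname{erf}\!\left(1/\sqrt{s}\right) + s\left(1-e^{1/s}\right) - 1.$$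
   Context: The error function is $\operatorname{erf}(x) = \frac{2}{\sqrt{\pi}}\int_0^x e^{-t^2}\,dt$. For a real number $\alpha$ with regular continued fraction $[a_0,a_1,a_2,\dots]$, the $n$th convergent is $p_n/q_n = [a_0,\dots,a_n]$ in lowest terms, with $q_n>0$ (equivalently $p_{-1}=1,q_{-1}=0,p_0=a_0,q_0=1$, $p_n=a_np_{n-1}+p_{n-2}$, $q_n=a_nq_{n-1}+q_{n-2}$). *)

theory Defs
  imports "HOL-Analysis.Analysis"
begin

definition erf :: "real \<Rightarrow> real" where
  "erf x = 2 / sqrt pi * integral {0..x} (\<lambda>t. exp (- (t ^ 2)))"

fun cf_rem :: "real \<Rightarrow> nat \<Rightarrow> real" where
  "cf_rem \<alpha> 0 = \<alpha>"
| "cf_rem \<alpha> (Suc n) = 1 / frac (cf_rem \<alpha> n)"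

definition cf_a :: "real \<Rightarrow> nat \<Rightarrow> int" where
  "cf_a \<alpha> n = \<lfloor>cf_rem \<alpha> n\<rfloor>"

text \<open>Convergent numerators p_n and denominators q_n
  (p_{-1}=1, q_{-1}=0, p_0=a_0, q_0=1, standard recurrences).\<close>
fun cf_p :: "real \<Rightarrow> nat \<Rightarrow> int" where
  "cf_p \<alpha> 0 = cf_a \<alpha> 0"
| "cf_p \<alpha> (Suc 0) = cf_a \<alpha> 1 * cf_a \<alpha> 0 + 1"
| "cf_p \<alpha> (Suc (Suc n)) = cf_a \<alpha> (n + 2) * cf_p \<alpha> (n + 1) + cf_p \<alpha> n"

fun cf_q :: "real \<Rightarrow> nat \<Rightarrow> int" where
  "cf_q \<alpha> 0 = 1"
| "cf_q \<alpha> (Suc 0) = cf_a \<alpha> 1"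
| "cf_q \<alpha> (Suc (Suc n)) = cf_a \<alpha> (n + 2) * cf_q \<alpha> (n + 1) + cf_q \<alpha> n"

end

theory Submission
  imports Defs "HOL-Analysis.Analysis"
begin


definition II :: "real \<Rightarrow> nat \<Rightarrow> nat \<Rightarrow> real" where
  "II t a b = integral {0..1} (\<lambda>x. x^a * (1-x)^b * exp (t*x))"

lemma II_has: "((\<lambda>x. x^a * (1-x)^b * exp (t*x)) has_integral II t a b) {0..1}"
  unfolding II_def by (intro integrable_integral integrable_continuous_real continuous_intros)

lemma II_pos: "II t a b > 0"
proof -
  let ?f = "\<lambda>x::real. x^a * (1-x)^b * exp (t*x)"
  have nn: "II t a b \<ge> 0"
    by (rule has_integral_nonneg[OF II_has]) auto
  moreover have "II t a b \<noteq> 0"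
  proof
    assume "II t a b = 0"
    then have "(?f has_integral 0) (cbox 0 1)" using II_has[of a b t] by simp
    then have "?f (1/2) = 0"
      by (intro has_integral_0_cbox_imp_0[of 0 1 ?f]) (auto intro!: continuous_intros)
    then show False by simp
  qed
  ultimately show ?thesis by linarith
qed

lemma II_split: "II t a (Suc b) + II t (Suc a) b = II t a b"
proof -
  have "((\<lambda>x. x^a * (1-x)^(Suc b) * exp (t*x) + x^(Suc a) * (1-x)^b * exp (t*x)) has_integral
     (II t a (Suc b) + II t (Suc a) b)) {0..1}"
    by (intro has_integral_add II_has)
  moreover have "(\<lambda>x. x^a * (1-x)^(Suc b) * exp (t*x) + x^(Suc a) * (1-x)^b * exp (t*x))
     = (\<lambda>x. x^a * (1-x)^b * exp (t*x))"
    by (rule ext) (simp add: algebra_simps)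
  ultimately show ?thesis using II_has[of a b t] has_integral_unique by metis
qed

lemma ftc01:
  assumes "\<And>x. (F has_real_derivative f x) (at x)"
  shows "(f has_integral (F 1 - F 0)) {0..1::real}"
  by (rule fundamental_theorem_of_calculus)
     (auto intro: has_field_derivative_at_within assms simp: has_real_derivative_iff_has_vector_derivative[symmetric])

lemma II_parts: "(real a + 1) * II t a (Suc b) - (real b + 1) * II t (Suc a) b + t * II t (Suc a) (Suc b) = 0"
proof -
  let ?H = "\<lambda>x::real. x^(Suc a) * (1-x)^(Suc b) * exp (t*x)"
  let ?h = "\<lambda>x::real. (real a + 1) * (x^a * (1-x)^(Suc b) * exp (t*x)) - (real b + 1) * (x^(Suc a) * (1-x)^b * exp (t*x))
            + t * (x^(Suc a) * (1-x)^(Suc b) * exp (t*x))"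
  have d: "(?H has_real_derivative ?h x) (at x)" for x
    by (rule derivative_eq_intros refl | simp)+ (simp add: algebra_simps)
  have z: "?H 1 - ?H 0 = 0" by simp
  have i1: "(?h has_integral 0) {0..1}" using ftc01[OF d] unfolding z .
  have i2: "(?h has_integral ((real a + 1) * II t a (Suc b) - (real b + 1) * II t (Suc a) b + t * II t (Suc a) (Suc b))) {0..1}"
    by (intro has_integral_add has_integral_diff has_integral_mult_right II_has)
  show ?thesis using has_integral_unique[OF i2 i1] .
qed

lemma II_00: "t * II t 0 0 = exp t - 1"
proof -
  have d: "((\<lambda>x::real. exp (t*x)) has_real_derivative t * exp (t*x)) (at x)" for x
    by (rule derivative_eq_intros refl | simp)+
  have z: "exp (t*1) - exp (t*0) = exp t - 1" by simp
  have i1: "((\<lambda>x. t * exp (t*x)) has_integral (exp t - 1)) {0..1}"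
    using ftc01[OF d] unfolding z .
  have e: "(\<lambda>x::real. t * (x^0 * (1-x)^0 * exp (t*x))) = (\<lambda>x. t * exp (t*x))" by simp
  have i2: "((\<lambda>x. t * exp (t*x)) has_integral (t * II t 0 0)) {0..1}"
    using has_integral_mult_right[where c=t, OF II_has[of 0 0 t]] unfolding e .
  show ?thesis using has_integral_unique[OF i2 i1] .
qed

lemma II_01: "t * II t 0 1 = II t 0 0 - 1"
proof -
  let ?H = "\<lambda>x::real. (1-x) * exp (t*x)"
  let ?h = "\<lambda>x::real. t * ((1-x) * exp (t*x)) - exp (t*x)"
  have d: "(?H has_real_derivative ?h x) (at x)" for x
    by (rule derivative_eq_intros refl | simp)+
  have z: "?H 1 - ?H 0 = -1" by simp
  have i1: "(?h has_integral -1) {0..1}" using ftc01[OF d] unfolding z .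
  have e: "(\<lambda>x::real. t * (x^0 * (1-x)^1 * exp (t*x)) - x^0 * (1-x)^0 * exp (t*x)) = ?h" by simp
  have i2: "(?h has_integral (t * II t 0 1 - II t 0 0)) {0..1}"
    using has_integral_diff[OF has_integral_mult_right[where c=t, OF II_has[of 0 1 t]] II_has[of 0 0 t]] unfolding e .
  have "t * II t 0 1 - II t 0 0 = -1" using has_integral_unique[OF i2 i1] .
  then show ?thesis by simp
qed

lemma II_rec1: "t * II t (Suc k) (Suc k) = (real k + 1) * (II t k k - 2 * II t k (Suc k))"
proof -
  have h: "II t (Suc k) k = II t k k - II t k (Suc k)" using II_split[of t k k] by linarith
  have p: "(real k + 1) * II t k (Suc k) - (real k + 1) * (II t k k - II t k (Suc k)) + t * II t (Suc k) (Suc k) = 0"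
    using II_parts[where a=k and b=k and t=t] unfolding h .
  have "t * II t (Suc k) (Suc k) = (real k + 1) * (II t k k - II t k (Suc k)) - (real k + 1) * II t k (Suc k)"
    using p by linarith
  also have "\<dots> = (real k + 1) * (II t k k - 2 * II t k (Suc k))" by (simp add: algebra_simps)
  finally show ?thesis .
qed

lemma II_rec2: "t * II t (Suc k) (Suc (Suc k)) = (2 * real k + 3) * II t (Suc k) (Suc k) - (real k + 1) * II t k (Suc k)"
proof -
  have h: "II t k (Suc (Suc k)) = II t k (Suc k) - II t (Suc k) (Suc k)" using II_split[of t k "Suc k"] by linarith
  have p: "(real k + 1) * (II t k (Suc k) - II t (Suc k) (Suc k)) - (real (Suc k) + 1) * II t (Suc k) (Suc k) + t * II t (Suc k) (Suc (Suc k)) = 0"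
    using II_parts[where a=k and b="Suc k" and t=t] unfolding h .
  have "t * II t (Suc k) (Suc (Suc k)) = (real (Suc k) + 1) * II t (Suc k) (Suc k) - (real k + 1) * (II t k (Suc k) - II t (Suc k) (Suc k))"
    using p by linarith
  also have "\<dots> = (2 * real k + 3) * II t (Suc k) (Suc k) - (real k + 1) * II t k (Suc k)" by (simp add: algebra_simps)
  finally show ?thesis .
qed



lemma cf_generic:
  fixes \<alpha> :: real and A :: "nat \<Rightarrow> int" and \<rho> :: "nat \<Rightarrow> real"
  assumes r0: "\<rho> 0 = -\<alpha>" and r1: "\<rho> 1 = 1"
    and rec: "\<And>n. \<rho> (n+2) = A n * \<rho> (n+1) + \<rho> n"
    and pos: "\<And>n. 0 < - \<rho> (n+2) / \<rho> (n+1)" and lt1: "\<And>n. - \<rho> (n+2) / \<rho> (n+1) < 1"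
  shows "cf_a \<alpha> n = A n \<and> cf_p \<alpha> n - \<alpha> * cf_q \<alpha> n = \<rho> (n+2)"
proof -
  have nz: "\<rho> (n+1) \<noteq> 0" for n using pos[of n] by auto
  have split: "- \<rho> n / \<rho> (n+1) = A n + (- \<rho> (n+2) / \<rho> (n+1))" for n
    using nz[of n] rec[of n] by (simp add: field_simps)
  have fl: "\<lfloor>- \<rho> n / \<rho> (n+1)\<rfloor> = A n" for n
    unfolding split[of n] using pos[of n] lt1[of n] by (simp add: floor_eq_iff)
  have fr: "frac (- \<rho> n / \<rho> (n+1)) = - \<rho> (n+2) / \<rho> (n+1)" for n
  proof -
    have "frac (- \<rho> n / \<rho> (n+1)) = frac (of_int (A n) + (- \<rho> (n+2) / \<rho> (n+1)))"
      by (metis split)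
    also have "\<dots> = - \<rho> (n+2) / \<rho> (n+1)"
      using pos[of n] lt1[of n] by (simp only: frac_add_of_int_left frac_eq) simp
    finally show ?thesis .
  qed
  have rem: "cf_rem \<alpha> n = - \<rho> n / \<rho> (n+1)" for n
  proof (induction n)
    case 0 then show ?case using r0 r1 by simp
  next
    case (Suc n)
    have "cf_rem \<alpha> (Suc n) = 1 / frac (cf_rem \<alpha> n)" by simp
    also have "\<dots> = 1 / (- \<rho> (n+2) / \<rho> (n+1))" using Suc fr by simp
    also have "\<dots> = - \<rho> (Suc n) / \<rho> (Suc n + 1)" using nz[of n] nz[of "Suc n"]
      by (simp add: field_simps)
    finally show ?case .
  qed
  have a: "cf_a \<alpha> n = A n" for n unfolding cf_a_def rem fl ..
  have "(cf_p \<alpha> n - \<alpha> * cf_q \<alpha> n = \<rho> (n+2)) \<and> (cf_p \<alpha> (n+1) - \<alpha> * cf_q \<alpha> (n+1) = \<rho> (n+3))" for n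
  proof (induction n)
    case 0
    have "real_of_int (A 0) = \<rho> (Suc (Suc 0)) + \<alpha>" using rec[of 0] r0 r1 by simp
    moreover have "\<rho> (Suc (Suc (Suc 0))) = A 1 * \<rho> (Suc (Suc 0)) + 1" using rec[of 1] r1 by (simp add: numeral_2_eq_2)
    ultimately show ?case by (simp add: a algebra_simps numeral_2_eq_2 numeral_3_eq_3)
  next
    case (Suc n)
    have "cf_p \<alpha> (Suc n + 1) - \<alpha> * cf_q \<alpha> (Suc n + 1)
        = A (n+2) * (cf_p \<alpha> (n+1) - \<alpha> * cf_q \<alpha> (n+1)) + (cf_p \<alpha> n - \<alpha> * cf_q \<alpha> n)"
      by (simp add: a algebra_simps)
    also have "\<dots> = \<rho> (Suc n + 3)" using Suc.IH rec[of "n+2"] by (simp add: eval_nat_numeral)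
    finally show ?case using Suc.IH by (simp add: eval_nat_numeral)
  qed
  then show ?thesis using a by blast
qed



locale cfe =
  fixes l s :: nat
  assumes l1: "l \<ge> 1" and s1: "s \<ge> 1"
begin

definition t :: real where "t = 1 / (real l * real s)"
definition E :: "nat \<Rightarrow> real" where "E k = t^k * II t k k / fact k"
definition G :: "nat \<Rightarrow> real" where "G k = t^(Suc k) * II t k (Suc k) / fact k"
definition R :: "nat \<Rightarrow> real" where
  "R n = (let k = n div 3 in
     if n mod 3 = 0 then (-1)^(k+1) * E k / l
     else if n mod 3 = 1 then (-1)^k * (E k / l - G k)
     else (-1)^(k+1) * G k)"
definition A :: "nat \<Rightarrow> int" where
  "A n = (if n = 0 then int s else if n mod 3 = 1 then (2 * int (n div 3) + 1) * int l - 1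
          else if n mod 3 = 2 then 1 else 2 * int s - 1)"

lemma t_pos: "t > 0" using l1 s1 by (simp add: t_def)
lemma lst: "real l * real s * t = 1" using l1 s1 by (simp add: t_def)

lemma m3: "Suc (3*k) div 3 = k" "Suc (3*k) mod 3 = 1" "Suc (Suc (3*k)) div 3 = k" "Suc (Suc (3*k)) mod 3 = 2"
  "Suc (Suc (Suc (3*k))) div 3 = Suc k" "Suc (Suc (Suc (3*k))) mod 3 = 0"
  by presburger+

lemma R0: "R (3*k) = (-1)^(k+1) * E k / l" by (simp add: R_def m3)
lemma R1: "R (3*k+1) = (-1)^k * (E k / l - G k)" by (simp add: R_def m3)
lemma R2: "R (3*k+2) = (-1)^(k+1) * G k" by (simp add: R_def m3)

lemma A1: "A (3*k+1) = (2 * int k + 1) * int l - 1" by (simp add: A_def m3)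
lemma A2: "A (3*k+2) = 1" by (simp add: A_def m3)
lemma A3: "A (3*k+3) = 2 * int s - 1" by (simp add: A_def m3)

lemma E_pos: "E k > 0" using t_pos II_pos by (simp add: E_def)
lemma G_pos: "G k > 0" using t_pos II_pos by (simp add: G_def)

lemma cancel_aux: "(c::real) \<noteq> 0 \<Longrightarrow> a * (c * X) / (c * f) = a * X / f"
  by (metis mult.left_commute mult_divide_mult_cancel_left_if)

lemma aux2: "(c::real) > 0 \<Longrightarrow> f > 0 \<Longrightarrow> T * (L * c * g) / (c * f) = L * (T * g / f)"
  by (simp add: field_simps)

lemma fact_Suc': "(fact (Suc k) :: real) = (real k + 1) * fact k" by simp

lemma E_rec: "E (Suc k) = E k - 2 * real l * real s * G k"
proof -
  have "E (Suc k) = t^k * (t * II t (Suc k) (Suc k)) / ((real k + 1) * fact k)"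
    unfolding E_def fact_Suc' by (simp add: mult_ac)
  also have "\<dots> = t^k * ((real k + 1) * (II t k k - 2 * II t k (Suc k))) / ((real k + 1) * fact k)"
    unfolding II_rec1 ..
  also have "\<dots> = t^k * (II t k k - 2 * II t k (Suc k)) / fact k"
    by (rule cancel_aux) (simp add: add_nonneg_eq_0_iff)
  also have "\<dots> = E k - 2 * (t^k * II t k (Suc k) / fact k)"
    by (simp add: E_def right_diff_distrib diff_divide_distrib)
  also have "2 * (t^k * II t k (Suc k) / fact k) = 2 * (real l * real s * t) * (t^k * II t k (Suc k) / fact k)"
    by (simp add: lst)
  also have "\<dots> = 2 * real l * real s * G k"
    by (simp add: G_def mult_ac)
  finally show ?thesis .
qed

lemma G_rec: "G (Suc k) = (2*k+3) * E (Suc k) - G k"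
proof -
  have "G (Suc k) = t^(Suc k) * (t * II t (Suc k) (Suc (Suc k))) / ((real k + 1) * fact k)"
    unfolding G_def fact_Suc' by (simp add: mult_ac)
  also have "\<dots> = t^(Suc k) * ((2*real k+3) * II t (Suc k) (Suc k) - (real k+1) * II t k (Suc k)) / ((real k + 1) * fact k)"
    using II_rec2[of t k] by simp
  also have "\<dots> = (2*real k+3) * (t^(Suc k) * II t (Suc k) (Suc k) / ((real k + 1) * fact k))
        - t^(Suc k) * ((real k+1) * II t k (Suc k)) / ((real k + 1) * fact k)"
    by (simp add: right_diff_distrib diff_divide_distrib mult_ac)
  also have "t^(Suc k) * ((real k+1) * II t k (Suc k)) / ((real k + 1) * fact k) = G k"
    unfolding G_def by (rule cancel_aux) (simp add: add_nonneg_eq_0_iff)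
  also have "t^(Suc k) * II t (Suc k) (Suc k) / ((real k + 1) * fact k) = E (Suc k)"
    unfolding E_def fact_Suc' ..
  finally show ?thesis by simp
qed

lemma E0: "E 0 = (exp t - 1) / t" using II_00[of t] t_pos by (simp add: E_def field_simps)
lemma G0: "G 0 = E 0 - 1" using II_01[of t] by (simp add: E_def G_def)

lemma ineq1: "2 * real l * G k < E k"
proof -
  have "2 * real l * real s * G k < E k" using E_rec[of k] E_pos[of "Suc k"] by linarith
  moreover have "2 * real l * G k \<le> 2 * real l * real s * G k"
    using s1 G_pos[of k] by (simp add: mult_le_cancel_left)
  ultimately show ?thesis by linarith
qed

lemma ineq2: "E (Suc k) < real l * G k"
proof -
  have "II t (Suc k) (Suc k) < II t k (Suc k)"
    using II_split[of t k "Suc k"] II_pos[of t k "Suc (Suc k)"] by linarith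
  moreover have "1 * 1 \<le> real l * (real k + 1)" using l1 by (intro mult_mono) auto
  ultimately have "II t (Suc k) (Suc k) < real l * (real k + 1) * II t k (Suc k)"
    using II_pos[of t k "Suc k"] by (smt (verit) mult_le_cancel_right1)
  then have "t^(Suc k) * II t (Suc k) (Suc k) / fact (Suc k) < t^(Suc k) * (real l * (real k + 1) * II t k (Suc k)) / ((real k + 1) * fact k)"
    using t_pos unfolding fact_Suc'[symmetric] by (intro divide_strict_right_mono mult_strict_left_mono) auto
  also have "\<dots> = real l * G k"
    unfolding G_def fact_Suc' by (rule aux2) auto
  also have "t^(Suc k) * II t (Suc k) (Suc k) / fact (Suc k) = E (Suc k)"
    by (simp add: E_def)
  finally show ?thesis .
qed

end


lemma ratio_aux:
  fixes \<sigma> a b :: real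
  assumes "\<sigma> = 1 \<or> \<sigma> = -1" "0 < b" "b < a"
  shows "0 < - (- \<sigma> * b) / (\<sigma> * a) \<and> - (- \<sigma> * b) / (\<sigma> * a) < 1"
  using assms by (auto simp: field_simps)

lemma neg1_pow: "((-1::real)^k = 1 \<or> (-1::real)^k = -1)"
  by (induction k) auto

context cfe
begin

lemma l_pos: "real l > 0" using l1 by simp

lemma G_lt: "2 * G k < E k / real l"
  using ineq1[of k] l_pos by (simp add: field_simps)

lemma G_lt': "G k < E k / real l"
  using G_lt[of k] G_pos[of k] by linarith

lemma E_lt: "E (Suc k) / real l < G k"
  using ineq2[of k] l_pos by (simp add: field_simps)

lemma E0_l: "E 0 / real l = real s * (exp t - 1)"
proof -
  have "E 0 / real l = (exp t - 1) / (t * real l)" using E0 by simp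
  also have "t * real l = 1 / real s" using lst s1 by (simp add: field_simps)
  finally show ?thesis by simp
qed

lemma R_0: "R 0 = real s - real s * exp t"
  using R0[of 0] E0_l by (simp add: algebra_simps)

lemma R_1: "R 1 = (real l - 1) * R 0 + 1"
proof -
  have "R 1 = E 0 / real l - G 0" using R1[of 0] by simp
  moreover have "R 0 = - (E 0 / real l)" using R0[of 0] by simp
  moreover have "(real l - 1) * (E 0 / real l) = E 0 - E 0 / real l" using l_pos by (simp add: field_simps)
  ultimately show ?thesis using G0 by (simp add: algebra_simps)
qed

lemma R_rec: "R (m+2) = A (m+2) * R (m+1) + R m"
proof -
  define k where "k = m div 3"
  have "m = 3*k \<or> m = 3*k+1 \<or> m = 3*k+2" unfolding k_def by presburger
  then consider "m = 3*k" | "m = 3*k+1" | "m = 3*k+2" by blast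
  then show ?thesis
  proof cases
    case 1
    then have i: "m+2 = 3*k+2" "m+1 = 3*k+1" by auto
    show ?thesis unfolding i 1 R0 R1 R2 A2 by (simp add: algebra_simps)
  next
    case 2
    have ieq: "m+2 = 3*k+3" using 2 by simp
    have iA: "A (m+2) = 2 * int s - 1" unfolding ieq by (rule A3)
    have i: "m+2 = 3*Suc k" "m+1 = 3*k+2" "A (m+2) = 2 * int s - 1" using 2 iA by auto
    have "R (m+2) = (-1)^k * E (Suc k) / real l" unfolding i R0 by simp
    also have "\<dots> = (-1)^k * (E k / real l - 2 * real s * G k)"
      unfolding E_rec using l_pos by (simp add: field_simps)
    also have "\<dots> = (2 * real s - 1) * R (m+1) + R m"
      unfolding i(2) unfolding 2 R1 R2 by (simp add: algebra_simps)
    finally show ?thesis using i by simp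
  next
    case 3
    have ieq: "m+2 = 3*Suc k+1" using 3 by simp
    have iA: "A (m+2) = (2 * int (Suc k) + 1) * int l - 1" unfolding ieq by (rule A1)
    have i: "m+2 = 3*Suc k + 1" "m+1 = 3*Suc k" "m = 3*k+2"
       "A (m+2) = (2 * int (Suc k) + 1) * int l - 1" using 3 iA by auto
    have "R (m+2) = (-1)^(Suc k) * (E (Suc k) / real l - G (Suc k))" unfolding i(1) R1 ..
    also have "\<dots> = (-1)^(Suc k) * (E (Suc k) / real l - (2*real k+3) * E (Suc k) + G k)"
      unfolding G_rec by (simp add: algebra_simps)
    also have "\<dots> = ((2 * real (Suc k) + 1) * real l - 1) * ((-1)^(Suc k + 1) * E (Suc k) / real l)
                   + (-1)^(k+1) * G k"
      using l_pos by (simp add: field_simps)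
    also have "\<dots> = A (m+2) * R (m+1) + R m"
      unfolding i(4) i(2) unfolding i(3) R0 R2 by simp
    finally show ?thesis .
  qed
qed

lemma R_ratio: "0 < - R (m+1) / R m \<and> - R (m+1) / R m < 1"
proof -
  define k where "k = m div 3"
  have "m = 3*k \<or> m = 3*k+1 \<or> m = 3*k+2" unfolding k_def by presburger
  then consider "m = 3*k" | "m = 3*k+1" | "m = 3*k+2" by blast
  then show ?thesis
  proof cases
    case 1
    have "R m = (-1)^(k+1) * (E k / real l)" "R (m+1) = - ((-1)^(k+1)) * (E k / real l - G k)"
      unfolding 1 R0 R1 by simp_all
    then show ?thesis using ratio_aux[of "(-1)^(k+1)" "E k / real l - G k" "E k / real l"]
      neg1_pow[of "k+1"] G_pos[of k] G_lt'[of k] by simp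
  next
    case 2
    have "R m = (-1)^k * (E k / real l - G k)" "R (m+1) = - ((-1)^k) * G k"
      unfolding 2 R1 by (simp_all add: R2[of k, simplified])
    then show ?thesis using ratio_aux[of "(-1)^k" "G k" "E k / real l - G k"]
      neg1_pow[of k] G_pos[of k] G_lt[of k] by simp
  next
    case 3
    have i: "m+1 = 3 * Suc k" using 3 by simp
    have "R m = (-1)^(k+1) * G k" "R (m+1) = - ((-1)^(k+1)) * (E (Suc k) / real l)"
      unfolding i unfolding 3 R2 R0 by simp_all
    then show ?thesis using ratio_aux[of "(-1)^(k+1)" "E (Suc k) / real l" "G k"]
      neg1_pow[of "k+1"] E_pos[of "Suc k"] l_pos E_lt[of k] by simp
  qed
qed

end


lemma ftc01':
  assumes "\<And>x. x \<in> {0..1} \<Longrightarrow> (F has_real_derivative f x) (at x)"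
  shows "(f has_integral (F 1 - F 0)) {0..1::real}"
proof (rule fundamental_theorem_of_calculus)
  show "0 \<le> (1::real)" by simp
  fix x :: real assume x: "x \<in> {0..1}"
  have "(F has_real_derivative f x) (at x within {0..1})"
    by (rule has_field_derivative_at_within[OF assms[OF x]])
  then show "(F has_vector_derivative f x) (at x within {0..1})"
    by (simp add: has_real_derivative_iff_has_vector_derivative)
qed

lemma gauss_part:
  fixes \<tau> :: real
  assumes tp: "\<tau> > 0"
  shows "((\<lambda>x. exp (\<tau>*(x*(1-x))) * exp (\<tau>*x)) has_integral
           (exp \<tau> / sqrt \<tau> * integral {0..sqrt \<tau>} (\<lambda>u. exp (-(u^2))))) {0..1}"
proof -
  define f where "f = (\<lambda>u::real. exp (-(u^2)))"
  define r where "r = sqrt \<tau>"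
  define \<Psi> where "\<Psi> = (\<lambda>z. integral {-1..z} f)"
  have rp: "r > 0" using tp by (simp add: r_def)
  have r2: "r^2 = \<tau>" using tp by (simp add: r_def)
  have cf: "continuous_on {a..b} f" for a b unfolding f_def by (intro continuous_intros)
  have d\<Psi>: "(\<Psi> has_real_derivative f z) (at z)" if "z \<in> {0..r}" for z
  proof -
    have "(\<Psi> has_real_derivative f z) (at z within {-1..r+1})"
      unfolding \<Psi>_def by (rule integral_has_real_derivative[OF cf]) (use that in auto)
    moreover have "at z within {-1..r+1} = at z"
      by (rule at_within_interior) (use that in auto)
    ultimately show ?thesis by simp
  qed
  define F where "F = (\<lambda>x. - (exp \<tau> / r) * \<Psi> (r * (1 - x)))"
  have dF: "(F has_real_derivative exp (\<tau>*(x*(1-x))) * exp (\<tau>*x)) (at x)" if "x \<in> {0..1}" for x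
  proof -
    have din: "((\<lambda>x. r * (1 - x)) has_real_derivative (- r)) (at x)"
      by (rule derivative_eq_intros refl | simp)+
    have "r * (1 - x) \<in> {0..r}" using that rp by (auto simp: mult_le_cancel_left1)
    from DERIV_chain2[OF d\<Psi>[OF this] din]
    have "((\<lambda>x. \<Psi> (r * (1 - x))) has_real_derivative f (r * (1 - x)) * (- r)) (at x)" .
    then have "(F has_real_derivative (- (exp \<tau> / r)) * (f (r * (1 - x)) * (- r))) (at x)"
      unfolding F_def by (rule DERIV_cmult)
    moreover have "(- (exp \<tau> / r)) * (f (r * (1 - x)) * (- r)) = exp (\<tau>*(x*(1-x))) * exp (\<tau>*x)"
    proof -
      have "(- (exp \<tau> / r)) * (f (r * (1 - x)) * (- r)) = exp \<tau> * exp (-((r * (1-x))^2))"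
        using rp by (simp add: f_def)
      also have "(r * (1-x))^2 = \<tau> * (1-x)^2" using r2 by (simp add: power_mult_distrib)
      also have "exp \<tau> * exp (-(\<tau> * (1-x)^2)) = exp (\<tau> + -(\<tau> * (1-x)^2))" by (simp only: exp_add)
      also have "\<tau> + -(\<tau> * (1-x)^2) = \<tau>*(x*(1-x)) + \<tau>*x" by (simp add: algebra_simps power2_eq_square)
      also have "exp (\<tau>*(x*(1-x)) + \<tau>*x) = exp (\<tau>*(x*(1-x))) * exp (\<tau>*x)" by (simp add: exp_add)
      finally show ?thesis .
    qed
    ultimately show ?thesis by simp
  qed
  have i: "((\<lambda>x. exp (\<tau>*(x*(1-x))) * exp (\<tau>*x)) has_integral (F 1 - F 0)) {0..1}"
    by (rule ftc01'[OF dF])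
  have "F 1 - F 0 = (exp \<tau> / r) * (\<Psi> r - \<Psi> 0)"
    by (simp add: F_def algebra_simps)
  also have "\<Psi> r - \<Psi> 0 = integral {0..r} f"
    using Henstock_Kurzweil_Integration.integral_combine[where a="-1" and c=0 and b=r and f=f] rp unfolding \<Psi>_def
    by (simp add: integrable_continuous_real[OF cf])
  finally show ?thesis using i by (simp add: r_def f_def)
qed

lemma sums_blocks3:
  fixes f :: "nat \<Rightarrow> real"
  assumes nn: "\<And>n. f n \<ge> 0" and S: "(\<lambda>k. f (3*k) + f (3*k+1) + f (3*k+2)) sums S"
  shows "f sums S"
proof -
  let ?b = "\<lambda>k. f (3*k) + f (3*k+1) + f (3*k+2)"
  have bs: "(\<Sum>k<n. ?b k) = sum f {..<3*n}" for n
    by (induction n) (simp_all add: eval_nat_numeral)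
  have bnn: "?b k \<ge> 0" for k using nn[of "3*k"] nn[of "3*k+1"] nn[of "3*k+2"] by simp
  have "sum f {..n} \<le> S" for n
  proof -
    have "sum f {..n} \<le> sum f {..<3*(Suc n)}"
      by (rule sum_mono2) (auto simp: nn)
    also have "\<dots> = (\<Sum>k<Suc n. ?b k)" by (simp only: bs)
    also have "\<dots> \<le> S"
    proof -
      have sb: "summable ?b" using S by (simp add: sums_iff)
      have "(\<Sum>k<Suc n. ?b k) \<le> suminf ?b" by (rule sum_le_suminf[OF sb]) (use bnn in auto)
      then show ?thesis using S by (simp add: sums_iff)
    qed
    finally show ?thesis .
  qed
  then have sm: "summable f" by (intro bounded_imp_summable[OF nn])
  then have "f sums suminf f" by (simp add: summable_sums)
  from sums_group[OF this, of 3]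
  have "(\<lambda>n. sum f {n * 3..<n * 3 + 3}) sums suminf f" by simp
  moreover have "sum f {n * 3..<n * 3 + 3} = ?b n" for n
    by (simp add: eval_nat_numeral mult.commute)
  ultimately have "?b sums suminf f" by simp
  then have "suminf f = S" using S sums_unique2 by blast
  then show ?thesis using sm summable_sums by fastforce
qed



context cfe
begin

lemma E_sums: "E sums (exp t / sqrt t * integral {0..sqrt t} (\<lambda>u. exp (-(u^2))))"
proof -
  define ff where "ff = (\<lambda>k (x::real). (t*(x*(1-x)))^k / fact k * exp (t*x))"
  have int: "(ff k has_integral E k) {0..1}" for k
  proof -
    have e1: "(\<lambda>x. t^k/fact k * (x^k*(1-x)^k*exp(t*x))) = ff k"
      by (rule ext) (simp add: ff_def power_mult_distrib)
    have e2: "t^k/fact k * II t k k = E k" by (simp add: E_def)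
    show ?thesis using has_integral_mult_right[where c="t^k/fact k", OF II_has[of k k t]]
      unfolding e1 e2 .
  qed
  define M where "M = (\<lambda>k. inverse (fact k) * t^k * exp t)"
  have bound: "norm (ff k x) \<le> M k" if x: "x \<in> {0..1}" for k x
  proof -
    have x01: "0 \<le> x*(1-x)" "x*(1-x) \<le> 1" using x by (auto simp: mult_le_one)
    have "\<bar>(t*(x*(1-x)))^k\<bar> \<le> t^k"
    proof -
      have "0 \<le> t*(x*(1-x))" using x01 t_pos by simp
      moreover have "t*(x*(1-x)) \<le> t" using x01 t_pos by (simp add: mult_le_cancel_left1)
      ultimately show ?thesis by (simp add: power_mono)
    qed
    moreover have "exp (t*x) \<le> exp t" using x t_pos by (auto simp: mult_le_cancel_left1)
    ultimately have "\<bar>(t*(x*(1-x)))^k\<bar> * exp (t*x) \<le> t^k * exp t"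
      by (intro mult_mono) auto
    then show ?thesis by (simp add: ff_def M_def abs_mult divide_inverse mult_ac)
  qed
  have sM: "summable M" unfolding M_def using summable_mult2[OF summable_exp[of t], of "exp t"] by simp
  have ul: "uniform_limit {0..1} (\<lambda>n x. \<Sum>i<n. ff i x) (\<lambda>x. suminf (\<lambda>i. ff i x)) sequentially"
    by (rule Weierstrass_m_test[OF bound sM])
  have cont: "continuous_on {0..1} (\<lambda>x. \<Sum>i<n. ff i x)" for n
    unfolding ff_def by (intro continuous_intros) auto
  obtain I J where I: "\<And>n. ((\<lambda>x. \<Sum>i<n. ff i x) has_integral I n) {0..1}"
    and J: "((\<lambda>x. suminf (\<lambda>i. ff i x)) has_integral J) {0..1}" and IJ: "I \<longlonglongrightarrow> J"
    using uniform_limit_integral[OF ul cont] by auto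
  have In: "I n = (\<Sum>i<n. E i)" for n
  proof -
    have "((\<lambda>x. \<Sum>i<n. ff i x) has_integral (\<Sum>i<n. E i)) {0..1}"
      by (rule has_integral_sum) (auto intro: int)
    then show ?thesis using I[of n] has_integral_unique by blast
  qed
  have "I = (\<lambda>n. \<Sum>i<n. E i)" using In by (rule ext)
  then have Es: "E sums J" using IJ unfolding sums_def by simp
  have g: "(\<lambda>x. suminf (\<lambda>i. ff i x)) = (\<lambda>x. exp (t*(x*(1-x))) * exp (t*x))"
  proof (rule ext)
    fix x :: real
    have "(\<lambda>n. (t*(x*(1-x)))^n /\<^sub>R fact n) sums exp (t*(x*(1-x)))" by (rule exp_converges)
    then have "(\<lambda>n. (t*(x*(1-x)))^n / fact n) sums exp (t*(x*(1-x)))"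
      by (simp add: divide_inverse mult.commute)
    from sums_mult2[OF this, of "exp (t*x)"]
    have "(\<lambda>i. ff i x) sums (exp (t*(x*(1-x))) * exp (t*x))" unfolding ff_def .
    then show "suminf (\<lambda>i. ff i x) = exp (t*(x*(1-x))) * exp (t*x)" by (rule sums_unique[symmetric])
  qed
  have "J = exp t / sqrt t * integral {0..sqrt t} (\<lambda>u. exp (-(u^2)))"
    using J unfolding g using gauss_part[OF t_pos] has_integral_unique by blast
  then show ?thesis using Es by simp
qed

end


context cfe
begin

definition Sg :: real where "Sg = exp t / sqrt t * integral {0..sqrt t} (\<lambda>u. exp (-(u^2)))"

lemma absR_sums: "(\<lambda>n. \<bar>R n\<bar>) sums (2 / real l * Sg)"
proof (rule sums_blocks3)
  show "\<And>n. 0 \<le> \<bar>R n\<bar>" by simp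
  have b: "\<bar>R (3*k)\<bar> + \<bar>R (3*k+1)\<bar> + \<bar>R (3*k+2)\<bar> = 2 / real l * E k" for k
  proof -
    have "\<bar>R (3*k)\<bar> = E k / real l" unfolding R0 using E_pos[of k] l_pos by (simp add: abs_mult power_abs)
    moreover have "\<bar>R (3*k+1)\<bar> = E k / real l - G k" unfolding R1 using G_lt'[of k] by (simp add: abs_mult power_abs)
    moreover have "\<bar>R (3*k+2)\<bar> = G k" unfolding R2 using G_pos[of k] by (simp add: abs_mult power_abs)
    ultimately show ?thesis by simp
  qed
  show "(\<lambda>k. \<bar>R (3*k)\<bar> + \<bar>R (3*k+1)\<bar> + \<bar>R (3*k+2)\<bar>) sums (2 / real l * Sg)"
    unfolding b Sg_def by (rule sums_mult[OF E_sums])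
qed

lemma sqrt_t: "sqrt t = 1 / sqrt (real l * real s)"
  by (simp add: t_def real_sqrt_divide)

end

lemma rhs_aux: "(a::real) > 0 \<Longrightarrow> c > 0 \<Longrightarrow> b > 0 \<Longrightarrow> e*(c*b/a)*(2/c*X) = 2/(a*a)*(e/(1/(a*b))*X)"
  by (simp add: field_simps)

lemma rhs1:
  fixes L S X :: real
  assumes "L > 0" "S > 0"
  shows "exp (1/(L*S)) * sqrt (pi*S/L) * (2/sqrt pi * X) = 2/L * (exp (1/(L*S)) / sqrt (1/(L*S)) * X)"
proof -
  have a: "sqrt (pi*S/L) = sqrt pi * sqrt S / sqrt L" by (simp add: real_sqrt_mult real_sqrt_divide)
  have b: "sqrt (1/(L*S)) = 1 / (sqrt L * sqrt S)" by (simp add: real_sqrt_mult real_sqrt_divide)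
  have c: "2/L = 2/(sqrt L * sqrt L)" using assms by simp
  have p: "sqrt L > 0" "sqrt S > 0" "sqrt pi > 0" using assms by auto
  show ?thesis unfolding a b c by (rule rhs_aux[OF p(1) p(3) p(2)])
qed

lemma thm_part1:
  fixes l s :: nat
  assumes l2: "l \<ge> 2" and s1: "s \<ge> 1"
  shows "(\<lambda>n. \<bar>real_of_int (cf_p (real s * exp (1 / (real l * real s))) n)
             - real s * exp (1 / (real l * real s)) * real_of_int (cf_q (real s * exp (1 / (real l * real s))) n)\<bar>) sums
         (exp (1 / (real l * real s)) * sqrt (pi * real s / real l) * erf (1 / sqrt (real l * real s)))"
proof -
  interpret cfe l s using l2 s1 by unfold_locales auto
  define \<alpha> where "\<alpha> = real s * exp t"
  have \<alpha>: "real s * exp (1 / (real l * real s)) = \<alpha>" by (simp add: \<alpha>_def t_def)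
  define \<rho> where "\<rho> = (\<lambda>n. if n = 0 then -\<alpha> else if n = 1 then 1 else R (n - 2))"
  have A0: "A 0 = int s" by (simp add: A_def)
  have A1': "A 1 = int l - 1" using A1[of 0] by simp
  have rec: "\<rho> (n+2) = A n * \<rho> (n+1) + \<rho> n" for n
  proof (cases n)
    case 0 then show ?thesis using R_0 A0 by (simp add: \<rho>_def \<alpha>_def)
  next
    case (Suc m)
    show ?thesis
    proof (cases m)
      case 0 then show ?thesis using Suc R_1 A1' by (simp add: \<rho>_def)
    next
      case (Suc j)
      then show ?thesis using \<open>n = Suc m\<close> R_rec[of j] by (simp add: \<rho>_def eval_nat_numeral)
    qed
  qed
  have E0lt: "E 0 < real l"
  proof (rule ccontr)
    assume "\<not> E 0 < real l"
    then have h: "real l \<le> E 0" by simp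
    have "2 * real l * (E 0 - 1) < E 0" using ineq1[of 0] G0 by simp
    then have "(2 * real l - 1) * E 0 < 2 * real l" by (simp add: algebra_simps)
    moreover have "(2 * real l - 1) * real l \<le> (2 * real l - 1) * E 0"
      using h l2 by (intro mult_left_mono) auto
    ultimately have "(2 * real l - 1) * real l < 2 * real l" by linarith
    then have "2 * real l - 1 < 2" using l_pos by (simp add: mult_less_cancel_right_pos)
    then show False using l2 by simp
  qed
  have ratio: "0 < - \<rho> (n+2) / \<rho> (n+1) \<and> - \<rho> (n+2) / \<rho> (n+1) < 1" for n
  proof (cases n)
    case 0
    have "R 0 = - (E 0 / real l)" using R0[of 0] by simp
    moreover have "0 < E 0 / real l" "E 0 / real l < 1" using E_pos[of 0] l_pos E0lt by auto
    ultimately show ?thesis using 0 by (simp add: \<rho>_def)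
  next
    case (Suc m)
    then show ?thesis using R_ratio[of m] by (simp add: \<rho>_def eval_nat_numeral)
  qed
  have cf: "cf_a \<alpha> n = A n \<and> cf_p \<alpha> n - \<alpha> * cf_q \<alpha> n = \<rho> (n+2)" for n
  proof (rule cf_generic[where \<rho>=\<rho> and A=A and \<alpha>=\<alpha>])
    show "\<rho> 0 = - \<alpha>" by (simp add: \<rho>_def)
    show "\<rho> 1 = 1" by (simp add: \<rho>_def)
    show "\<rho> (n+2) = A n * \<rho> (n+1) + \<rho> n" for n by (rule rec)
    show "0 < - \<rho> (n+2) / \<rho> (n+1)" for n using ratio[of n] by (rule conjunct1)
    show "- \<rho> (n+2) / \<rho> (n+1) < 1" for n using ratio[of n] by (rule conjunct2)
  qed
  have terms: "\<bar>real_of_int (cf_p \<alpha> n) - \<alpha> * real_of_int (cf_q \<alpha> n)\<bar> = \<bar>R n\<bar>" for n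
    using cf[of n] by (simp add: \<rho>_def)
  have rhs: "exp (1 / (real l * real s)) * sqrt (pi * real s / real l) * erf (1 / sqrt (real l * real s))
      = 2 / real l * Sg"
    unfolding erf_def Sg_def sqrt_t[symmetric] unfolding sqrt_t t_def
    by (rule rhs1) (use l_pos s1 in auto)
  show ?thesis unfolding \<alpha> terms rhs by (rule absR_sums)
qed



lemma rhs2:
  fixes S X :: real
  assumes "S > 0"
  shows "exp (1/S) * sqrt (pi*S) * (2/sqrt pi * X) = 2 * (exp (1/S) / sqrt (1/S) * X)"
  using rhs1[of 1 S X] assms by simp

lemma thm_part2:
  fixes s :: nat
  assumes s1: "s \<ge> 1"
  shows "(\<lambda>n. \<bar>real_of_int (cf_p (real s * exp (1 / real s)) n)
             - real s * exp (1 / real s) * real_of_int (cf_q (real s * exp (1 / real s)) n)\<bar>) sums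
         (exp (1 / real s) * sqrt (pi * real s) * erf (1 / sqrt (real s))
                  + real s * (1 - exp (1 / real s)) - 1)"
proof -
  interpret cfe "Suc 0" s using s1 by unfold_locales auto
  define \<alpha> where "\<alpha> = real s * exp t"
  have t1: "t = 1 / real s" unfolding t_def by simp
  have \<alpha>: "real s * exp (1 / real s) = \<alpha>" unfolding \<alpha>_def t1 ..
  define \<rho> where "\<rho> = (\<lambda>n. if n = 0 then -\<alpha> else if n = 1 then 1 else R n)"
  define A' where "A' = (\<lambda>n. if n = 0 then int s + 1 else A (n+2))"
  have A2': "A 2 = 1" by (simp add: A_def)
  have Rr1: "R 1 = 1" using R_1 by simp
  have Rr2: "R 2 = 1 + real s - \<alpha>" using R_rec[of 0] A2' Rr1 R_0 by (simp add: \<alpha>_def eval_nat_numeral)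
  have rec: "\<rho> (n+2) = A' n * \<rho> (n+1) + \<rho> n" for n
  proof (cases n)
    case 0 then show ?thesis using Rr2 by (simp add: \<rho>_def A'_def eval_nat_numeral)
  next
    case (Suc m)
    show ?thesis
    proof (cases m)
      case 0 then show ?thesis using Suc R_rec[of 1] Rr1 by (simp add: \<rho>_def A'_def eval_nat_numeral)
    next
      case (Suc j)
      then show ?thesis using \<open>n = Suc m\<close> R_rec[of "j+2"] by (simp add: \<rho>_def A'_def eval_nat_numeral)
    qed
  qed
  have ratio: "0 < - \<rho> (n+2) / \<rho> (n+1) \<and> - \<rho> (n+2) / \<rho> (n+1) < 1" for n
  proof (cases n)
    case 0
    have "R 2 = - G 0" using R2[of 0] by (simp add: eval_nat_numeral)
    moreover have "0 < G 0" "G 0 < 1" using G_pos[of 0] G_lt[of 0] G0 by auto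
    ultimately show ?thesis using 0 by (simp add: \<rho>_def eval_nat_numeral)
  next
    case (Suc m)
    then show ?thesis using R_ratio[of "m+2"] by (simp add: \<rho>_def eval_nat_numeral)
  qed
  have cf: "cf_a \<alpha> n = A' n \<and> cf_p \<alpha> n - \<alpha> * cf_q \<alpha> n = \<rho> (n+2)" for n
  proof (rule cf_generic[where \<rho>=\<rho> and A=A' and \<alpha>=\<alpha>])
    show "\<rho> 0 = - \<alpha>" by (simp add: \<rho>_def)
    show "\<rho> 1 = 1" by (simp add: \<rho>_def)
    show "\<rho> (n+2) = A' n * \<rho> (n+1) + \<rho> n" for n by (rule rec)
    show "0 < - \<rho> (n+2) / \<rho> (n+1)" for n using ratio[of n] by (rule conjunct1)
    show "- \<rho> (n+2) / \<rho> (n+1) < 1" for n using ratio[of n] by (rule conjunct2)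
  qed
  have terms: "\<bar>real_of_int (cf_p \<alpha> n) - \<alpha> * real_of_int (cf_q \<alpha> n)\<bar> = \<bar>R (n+2)\<bar>" for n
    using cf[of n] by (simp add: \<rho>_def)
  have sh: "(\<lambda>n. \<bar>R (n+2)\<bar>) sums (2 / real (Suc 0) * Sg - (\<Sum>i<2. \<bar>R i\<bar>))"
    using sums_split_initial_segment[OF absR_sums, of 2] .
  have init: "(\<Sum>i<2. \<bar>R i\<bar>) = real s * (exp t - 1) + 1"
  proof -
    have "exp t \<ge> 1" using t_pos by simp
    then have nn: "real s * (exp t - 1) \<ge> 0" by simp
    have "R 0 = - (real s * (exp t - 1))" using R_0 by (simp add: algebra_simps)
    then have "\<bar>R 0\<bar> = real s * (exp t - 1)" using nn by (simp only: abs_minus_cancel abs_of_nonneg)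
    then show ?thesis using Rr1 by (simp add: eval_nat_numeral)
  qed
  have sqt: "sqrt t = 1 / sqrt (real s)" using sqrt_t by simp
  have rhs: "exp (1 / real s) * sqrt (pi * real s) * erf (1 / sqrt (real s))
                  + real s * (1 - exp (1 / real s)) - 1 = 2 / real (Suc 0) * Sg - (\<Sum>i<2. \<bar>R i\<bar>)"
  proof -
    have "exp (1 / real s) * sqrt (pi * real s) * erf (1 / sqrt (real s)) = 2 * Sg"
      unfolding erf_def Sg_def sqt[symmetric] unfolding sqt t1
      by (rule rhs2) (use s1 in auto)
    then show ?thesis unfolding init t1 by (simp add: algebra_simps)
  qed
  show ?thesis unfolding \<alpha> terms rhs by (rule sh)
qed

theorem theorem3:
  shows "(\<forall>(l::nat) (s::nat). l \<ge> 2 \<and> s \<ge> 1 \<longrightarrow>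
           (let \<alpha> = real s * exp (1 / (real l * real s)) in
             (\<lambda>n. \<bar>real_of_int (cf_p \<alpha> n) - \<alpha> * real_of_int (cf_q \<alpha> n)\<bar>) sums
               (exp (1 / (real l * real s)) * sqrt (pi * real s / real l)
                  * erf (1 / sqrt (real l * real s)))))
       \<and> (\<forall>(s::nat). s \<ge> 1 \<longrightarrow>
           (let \<alpha> = real s * exp (1 / real s) in
             (\<lambda>n. \<bar>real_of_int (cf_p \<alpha> n) - \<alpha> * real_of_int (cf_q \<alpha> n)\<bar>) sums
               (exp (1 / real s) * sqrt (pi * real s) * erf (1 / sqrt (real s))
                  + real s * (1 - exp (1 / real s)) - 1)))"
  unfolding Let_def using thm_part1 thm_part2 by blast


end
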